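(* Let $s \geq 1$, $\Pi \subset [s]$, and $u \in \mathbb{Z}$ with $|\Pi| > u \geq 0$, let $v \in \mathbb{Z}$, and let $\Gamma, \alpha \in \mathbb{Z}^s$. Then \[ \sum_{\substack{\sigma \in \mathfrak{S}_s \\ M \subset \Pi}} (-1)^{|M|} \operatorname{sgn}(\sigma)\, \Delta_s(\sigma \cdot^\alpha \Gamma - 1_M) \binom{v - |M| + u}{u} = 0, \] where $\binom{v - |M| + u}{u}$ denotes the polynomial $\frac{1}{u!}\prod_{i=1}^u (v - |M| + i)$.
   Context: For $\sigma \in \mathfrak{S}_s$ and $\Gamma = (\gamma_1,\ldots,\gamma_s), \alpha = (\alpha_1, \ldots, \alpha_s) \in \mathbb{Z}^s$, $\sigma \cdot^\alpha \Gamma \in \mathbb{Z}^s$ has $\ell$-th entry $\gamma_{\sigma^{-1}(\ell)} + \alpha_{\sigma^{-1}(\ell)} - \alpha_\ell$. $\Delta_s(y_1, \ldots, y_s) = \prod_{1 \leq v < w \leq s}(y_w - y_v)$. $1_M \in \{0,1\}^s$ is the indicator vector of $M \subset [s]$. *)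

theory Defs
  imports "HOL-Combinatorics.Combinatorics"
begin

text \<open>Vectors in Z^s are modelled as functions nat => int, only entries 1..s matter.\<close>

definition perm_act :: "(nat \<Rightarrow> int) \<Rightarrow> (nat \<Rightarrow> nat) \<Rightarrow> (nat \<Rightarrow> int) \<Rightarrow> (nat \<Rightarrow> int)" where
  "perm_act \<alpha> \<sigma> \<Gamma> = (\<lambda>l. \<Gamma> (inv \<sigma> l) + \<alpha> (inv \<sigma> l) - \<alpha> l)"

definition Vandermonde :: "nat \<Rightarrow> (nat \<Rightarrow> int) \<Rightarrow> int" where
  "Vandermonde s y = (\<Prod>v\<in>{1..s}. \<Prod>w\<in>{v<..s}. y w - y v)"

definition indicator_vec :: "nat set \<Rightarrow> nat \<Rightarrow> int" where
  "indicator_vec M = (\<lambda>l. if l \<in> M then 1 else 0)"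

definition poly_binom :: "int \<Rightarrow> nat \<Rightarrow> rat" where
  "poly_binom x u = (\<Prod>i\<in>{1..u}. of_int (x + int i)) / of_nat (fact u)"

end

theory Submission
  imports Defs
begin

lemma sum_nat_set_ge:
  fixes A :: "nat set"
  assumes "finite A"
  shows "(\<Sum>i<card A. i) \<le> \<Sum>A"
  using assms
proof (induction "card A" arbitrary: A)
  case 0 then show ?case by simp
next
  case (Suc n)
  then have ne: "A \<noteq> {}" by auto
  define m where "m = Max A"
  have mA: "m \<in> A" using Suc.prems ne m_def by simp
  have sub: "A \<subseteq> {0..m}" using Suc.prems m_def by auto
  have "card A \<le> Suc m" using card_mono[OF _ sub] by simp
  then have nm: "n \<le> m" using Suc.hyps by simp
  have cA': "card (A - {m}) = n" using Suc.hyps mA by simp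
  have IH: "(\<Sum>i<n. i) \<le> \<Sum>(A - {m})" using Suc.hyps(1)[of "A - {m}"] cA' Suc.prems by simp
  have "\<Sum>A = m + \<Sum>(A - {m})" using Suc.prems mA by (simp add: sum.remove)
  then show ?case using IH nm Suc.hyps(2)[symmetric] by simp
qed

lemma sum_inj_ge:
  fixes j :: "'a \<Rightarrow> nat"
  assumes "finite S" "inj_on j S"
  shows "(\<Sum>i<card S. i) \<le> (\<Sum>l\<in>S. j l)"
proof -
  have "(\<Sum>l\<in>S. j l) = \<Sum>(j ` S)" using assms by (simp add: sum.reindex)
  moreover have "card (j ` S) = card S" using assms by (simp add: card_image)
  ultimately show ?thesis using sum_nat_set_ge[of "j ` S"] assms by simp
qed

lemma prod_fiber_pow:
  fixes f :: "'b \<Rightarrow> 'c::comm_monoid_mult"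
  assumes "finite T" "finite S" "\<phi> ` T \<subseteq> S"
  shows "(\<Prod>p\<in>T. f (\<phi> p)) = (\<Prod>l\<in>S. f l ^ card {p\<in>T. \<phi> p = l})
     \<and> (\<Sum>l\<in>S. card {p\<in>T. \<phi> p = l}) = card T"
  using assms
proof (induction T rule: finite_induct)
  case empty then show ?case by simp
next
  case (insert x T)
  have c: "card {p\<in>insert x T. \<phi> p = l} = card {p\<in>T. \<phi> p = l} + (if \<phi> x = l then 1 else 0)" for l
  proof -
    have "{p\<in>insert x T. \<phi> p = l} = (if \<phi> x = l then insert x {p\<in>T. \<phi> p = l} else {p\<in>T. \<phi> p = l})" by auto
    then show ?thesis using insert by auto
  qed
  have xS: "\<phi> x \<in> S" using insert by auto
  have "(\<Prod>l\<in>S. f l ^ card {p\<in>insert x T. \<phi> p = l}) = (\<Prod>l\<in>S. f l ^ card {p\<in>T. \<phi> p = l} * (if \<phi> x = l then f l else 1))"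
    by (rule prod.cong[OF refl], subst c, simp add: power_add)
  also have "\<dots> = (\<Prod>l\<in>S. f l ^ card {p\<in>T. \<phi> p = l}) * f (\<phi> x)"
    using insert xS by (simp add: prod.distrib prod.delta)
  finally have 1: "(\<Prod>l\<in>S. f l ^ card {p\<in>insert x T. \<phi> p = l}) = (\<Prod>l\<in>S. f l ^ card {p\<in>T. \<phi> p = l}) * f (\<phi> x)" .
  have "(\<Sum>l\<in>S. card {p\<in>insert x T. \<phi> p = l}) = (\<Sum>l\<in>S. card {p\<in>T. \<phi> p = l}) + 1"
    using insert xS by (subst sum.cong[OF refl c]) (simp_all add: sum.distrib sum.delta)
  then show ?case using insert 1 by (simp add: mult.commute)
qed

lemma alt1:
  fixes a :: "nat \<Rightarrow> int" and \<phi> :: "'b \<Rightarrow> nat"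
  assumes fS: "finite S" and fT: "finite T" and im: "\<phi> ` T \<subseteq> S" and lt: "card T < (\<Sum>i<card S. i)"
  shows "(\<Sum>\<sigma>\<in>{\<sigma>. \<sigma> permutes S}. sign \<sigma> * (\<Prod>p\<in>T. a (\<sigma> (\<phi> p)))) = 0"
proof -
  define j where "j l = card {p\<in>T. \<phi> p = l}" for l
  have pw: "(\<Prod>p\<in>T. a (\<sigma> (\<phi> p))) = (\<Prod>l\<in>S. a (\<sigma> l) ^ j l)" for \<sigma>
    using prod_fiber_pow[OF fT fS im, of "\<lambda>l. a (\<sigma> l)"] unfolding j_def by simp
  have sj: "(\<Sum>l\<in>S. j l) = card T"
    using prod_fiber_pow[OF fT fS im, of id] unfolding j_def by simp
  have "\<not> inj_on j S" using sum_inj_ge[OF fS, of j] sj lt by linarith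
  then obtain l1 l2 where l: "l1 \<in> S" "l2 \<in> S" "l1 \<noteq> l2" "j l1 = j l2"
    unfolding inj_on_def by blast
  define t where "t = transpose l1 l2"
  have tp: "t permutes S" unfolding t_def using l by (simp add: permutes_swap_id)
  have jt: "j (t l) = j l" for l using l unfolding t_def by (auto simp: transpose_def)
  define f where "f \<sigma> = sign \<sigma> * (\<Prod>l\<in>S. a (\<sigma> l) ^ j l)" for \<sigma> :: "nat \<Rightarrow> nat"
  have "f (\<sigma> \<circ> t) = - f \<sigma>" if "\<sigma> permutes S" for \<sigma>
  proof -
    have ps: "permutation \<sigma>" "permutation t" using that tp fS permutation_permutes by blast+
    have sg: "sign (\<sigma> \<circ> t) = - (sign \<sigma> :: int)"
      using sign_compose[OF ps] l unfolding t_def by (simp add: sign_swap_id)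
    have "(\<Prod>l\<in>S. a ((\<sigma> \<circ> t) l) ^ j l) = (\<Prod>l\<in>S. a (\<sigma> (t l)) ^ j (t l))"
      using jt by simp
    also have "\<dots> = (\<Prod>l\<in>S. a (\<sigma> l) ^ j l)"
      using prod.permute[OF tp, of "\<lambda>l. a (\<sigma> l) ^ j l"] by (simp add: comp_def)
    finally show ?thesis unfolding f_def using sg by simp
  qed
  then have "sum f {\<sigma>. \<sigma> permutes S} = - sum f {\<sigma>. \<sigma> permutes S}"
    using sum_permutations_compose_right[OF tp, of f] by (simp add: sum_negf)
  then have "sum f {\<sigma>. \<sigma> permutes S} = 0" by simp
  then show ?thesis unfolding f_def using pw by simp
qed

lemma alt2:
  fixes a :: "nat \<Rightarrow> int" and v w :: "'b \<Rightarrow> nat"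
  assumes fS: "finite S" and fT: "finite T" and imv: "v ` T \<subseteq> S" and imw: "w ` T \<subseteq> S"
    and lt: "card T < (\<Sum>i<card S. i)"
  shows "(\<Sum>\<sigma>\<in>{\<sigma>. \<sigma> permutes S}. sign \<sigma> * (\<Prod>p\<in>T. a (\<sigma> (w p)) - a (\<sigma> (v p)))) = 0"
proof -
  define \<phi> where "\<phi> X p = (if p \<in> X then w p else v p)" for X p
  have ex: "(\<Prod>p\<in>T. a (\<sigma> (w p)) - a (\<sigma> (v p)))
      = (\<Sum>X\<in>Pow T. (-1) ^ card (T - X) * (\<Prod>p\<in>T. a (\<sigma> (\<phi> X p))))" for \<sigma>
  proof -
    have "(\<Prod>p\<in>T. a (\<sigma> (w p)) - a (\<sigma> (v p))) = (\<Prod>p\<in>T. a (\<sigma> (w p)) + - a (\<sigma> (v p)))" by simp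
    also have "\<dots> = (\<Sum>X\<in>Pow T. (\<Prod>p\<in>X. a (\<sigma> (w p))) * (\<Prod>p\<in>T-X. - a (\<sigma> (v p))))"
      by (rule prod_add[OF fT])
    also have "\<dots> = (\<Sum>X\<in>Pow T. (-1) ^ card (T - X) * (\<Prod>p\<in>T. a (\<sigma> (\<phi> X p))))"
    proof (rule sum.cong[OF refl])
      fix X assume X: "X \<in> Pow T"
      have "(\<Prod>p\<in>T. a (\<sigma> (\<phi> X p))) = (\<Prod>p\<in>T \<inter> {p. p \<in> X}. a (\<sigma> (w p))) * (\<Prod>p\<in>T \<inter> - {p. p \<in> X}. a (\<sigma> (v p)))"
        unfolding \<phi>_def using prod.If_cases[OF fT, of "\<lambda>p. p \<in> X" "\<lambda>p. a (\<sigma> (w p))" "\<lambda>p. a (\<sigma> (v p))"]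
        by (simp add: if_distrib)
      also have "T \<inter> {p. p \<in> X} = X" using X by auto
      also have "T \<inter> - {p. p \<in> X} = T - X" by auto
      finally show "(\<Prod>p\<in>X. a (\<sigma> (w p))) * (\<Prod>p\<in>T-X. - a (\<sigma> (v p))) = (-1) ^ card (T - X) * (\<Prod>p\<in>T. a (\<sigma> (\<phi> X p)))"
        by (simp add: prod_uminus)
    qed
    finally show ?thesis .
  qed
  have z: "(\<Sum>\<sigma>\<in>{\<sigma>. \<sigma> permutes S}. sign \<sigma> * (\<Prod>p\<in>T. a (\<sigma> (\<phi> X p)))) = 0" if "X \<in> Pow T" for X
    by (rule alt1[OF fS fT _ lt]) (use imv imw in \<open>auto simp: \<phi>_def\<close>)
  have "(\<Sum>\<sigma>\<in>{\<sigma>. \<sigma> permutes S}. sign \<sigma> * (\<Prod>p\<in>T. a (\<sigma> (w p)) - a (\<sigma> (v p))))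
      = (\<Sum>X\<in>Pow T. (-1) ^ card (T - X) * (\<Sum>\<sigma>\<in>{\<sigma>. \<sigma> permutes S}. sign \<sigma> * (\<Prod>p\<in>T. a (\<sigma> (\<phi> X p)))))"
    unfolding ex by (simp add: sum_distrib_left sum.swap[of _ "Pow T"] mult.left_commute)
  also have "\<dots> = 0" using z by simp
  finally show ?thesis .
qed

definition pairsP :: "nat \<Rightarrow> (nat \<times> nat) set" where
  "pairsP s = Sigma {1..s} (\<lambda>v. {v<..s})"

lemma finite_pairsP: "finite (pairsP s)" unfolding pairsP_def by simp

lemma vand_prod: "Vandermonde s y = (\<Prod>p\<in>pairsP s. y (snd p) - y (fst p))"
  unfolding Vandermonde_def pairsP_def by (subst prod.Sigma) (auto simp: case_prod_beta)

lemma card_pairsP: "card (pairsP s) = (\<Sum>i<s. i)"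
proof (induction s)
  case 0 then show ?case by (simp add: pairsP_def)
next
  case (Suc s)
  have "card (pairsP s) = (\<Sum>v\<in>{1..s}. card {v<..s})"
    unfolding pairsP_def by (simp add: card_SigmaI)
  have a: "card (pairsP n) = (\<Sum>v\<in>{1..n}. n - v)" for n
    unfolding pairsP_def by (simp add: card_SigmaI)
  have "(\<Sum>v\<in>{1..Suc s}. Suc s - v) = (\<Sum>v\<in>{1..s}. Suc s - v)" by (simp add: sum.cl_ivl_Suc)
  also have "\<dots> = (\<Sum>v\<in>{1..s}. Suc (s - v))" by (rule sum.cong) auto
  also have "\<dots> = card (pairsP s) + s" using a[of s] by (simp only: sum_Suc) simp
  finally show ?case using a[of "Suc s"] Suc.IH by simp
qed

lemma indep:
  fixes a c :: "nat \<Rightarrow> int"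
  shows "(\<Sum>\<sigma>\<in>{\<sigma>. \<sigma> permutes {1..s}}. sign \<sigma> * Vandermonde s (\<lambda>l. a (\<sigma> l) - c l))
       = (\<Sum>\<sigma>\<in>{\<sigma>. \<sigma> permutes {1..s}}. sign \<sigma> * (\<Prod>p\<in>pairsP s. a (\<sigma> (snd p)) - a (\<sigma> (fst p))))"
proof -
  let ?P = "pairsP s"
  let ?S = "{\<sigma>. \<sigma> permutes {1..s}}"
  define g where "g X = (\<Prod>p\<in>?P - X. c (fst p) - c (snd p)) *
     (\<Sum>\<sigma>\<in>?S. sign \<sigma> * (\<Prod>p\<in>X. a (\<sigma> (snd p)) - a (\<sigma> (fst p))))" for X
  have "(\<Sum>\<sigma>\<in>?S. sign \<sigma> * Vandermonde s (\<lambda>l. a (\<sigma> l) - c l))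
      = (\<Sum>\<sigma>\<in>?S. sign \<sigma> * (\<Sum>X\<in>Pow ?P. (\<Prod>p\<in>X. a (\<sigma> (snd p)) - a (\<sigma> (fst p))) * (\<Prod>p\<in>?P - X. c (fst p) - c (snd p))))"
  proof (rule sum.cong[OF refl])
    fix \<sigma>
    have "Vandermonde s (\<lambda>l. a (\<sigma> l) - c l) = (\<Prod>p\<in>?P. (a (\<sigma> (snd p)) - a (\<sigma> (fst p))) + (c (fst p) - c (snd p)))"
      unfolding vand_prod by (rule prod.cong) auto
    also have "\<dots> = (\<Sum>X\<in>Pow ?P. (\<Prod>p\<in>X. a (\<sigma> (snd p)) - a (\<sigma> (fst p))) * (\<Prod>p\<in>?P - X. c (fst p) - c (snd p)))"
      by (rule prod_add[OF finite_pairsP])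
    finally show "sign \<sigma> * Vandermonde s (\<lambda>l. a (\<sigma> l) - c l) = sign \<sigma> * (\<Sum>X\<in>Pow ?P. (\<Prod>p\<in>X. a (\<sigma> (snd p)) - a (\<sigma> (fst p))) * (\<Prod>p\<in>?P - X. c (fst p) - c (snd p)))" by simp
  qed
  also have "\<dots> = (\<Sum>X\<in>Pow ?P. g X)"
    unfolding g_def by (simp add: sum_distrib_left sum_distrib_right sum.swap[of _ "Pow ?P"] mult_ac)
  also have "\<dots> = g ?P + (\<Sum>X\<in>Pow ?P - {?P}. g X)"
    using finite_pairsP by (subst sum.remove[of _ ?P]) auto
  also have "(\<Sum>X\<in>Pow ?P - {?P}. g X) = 0"
  proof (rule sum.neutral, rule ballI)
    fix X assume X: "X \<in> Pow ?P - {?P}"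
    then have "X \<subset> ?P" by auto
    then have "card X < card ?P" using finite_pairsP psubset_card_mono by blast
    then have lt: "card X < (\<Sum>i<card {1..s}. i)" by (simp add: card_pairsP)
    have fX: "finite X" using X finite_pairsP finite_subset by blast
    have "(\<Sum>\<sigma>\<in>?S. sign \<sigma> * (\<Prod>p\<in>X. a (\<sigma> (snd p)) - a (\<sigma> (fst p)))) = 0"
      by (rule alt2[of "{1..s}"]) (use X lt fX in \<open>auto simp: pairsP_def\<close>)
    then show "g X = 0" unfolding g_def by simp
  qed
  finally show ?thesis unfolding g_def by simp
qed

lemma pbP_shift: "(\<Prod>i\<in>{1..Suc u}. (of_int (x - 1 + int i) :: rat)) = of_int x * (\<Prod>i\<in>{1..u}. of_int (x + int i))"
proof (induction u)
  case 0 then show ?case by simp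
next
  case (Suc u)
  have "(\<Prod>i\<in>{1..Suc (Suc u)}. (of_int (x - 1 + int i) :: rat)) = (\<Prod>i\<in>{1..Suc u}. (of_int (x - 1 + int i) :: rat)) * of_int (x - 1 + int (Suc (Suc u)))"
    by (simp add: prod.cl_ivl_Suc)
  also have "\<dots> = of_int x * ((\<Prod>i\<in>{1..u}. of_int (x + int i)) * of_int (x + int (Suc u)))"
    using Suc by simp
  also have "(\<Prod>i\<in>{1..u}. of_int (x + int i)) * of_int (x + int (Suc u)) = (\<Prod>i\<in>{1..Suc u}. (of_int (x + int i) :: rat))"
    by (simp add: prod.cl_ivl_Suc)
  finally show ?case .
qed

lemma pb_pascal: "poly_binom x (Suc u) - poly_binom (x - 1) (Suc u) = poly_binom x u"
proof -
  let ?P = "\<Prod>i\<in>{1..u}. (of_int (x + int i) :: rat)"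
  have 1: "(\<Prod>i\<in>{1..Suc u}. (of_int (x + int i) :: rat)) = ?P * of_int (x + int (Suc u))"
    by (simp add: prod.cl_ivl_Suc)
  have f: "(of_nat (fact (Suc u)) :: rat) = of_nat (Suc u) * of_nat (fact u)" by (simp only: fact_Suc of_nat_mult of_nat_id)
  have fp: "(of_nat (fact u) :: rat) \<noteq> 0" by simp
  have n: "(of_nat (Suc u) :: rat) \<noteq> 0" by simp
  have k: "?P * of_int (x + int (Suc u)) - of_int x * ?P = of_nat (Suc u) * ?P" by (simp add: algebra_simps)
  have "poly_binom x (Suc u) - poly_binom (x - 1) (Suc u)
     = (?P * of_int (x + int (Suc u)) - of_int x * ?P) / (of_nat (Suc u) * of_nat (fact u))"
    unfolding poly_binom_def 1 pbP_shift f by (simp add: diff_divide_distrib)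
  also have "\<dots> = ?P / of_nat (fact u)" unfolding k using n fp by simp
  finally show ?thesis unfolding poly_binom_def .
qed

lemma pow_insert_sum:
  assumes "finite A" "x \<notin> A"
  shows "(\<Sum>M\<in>Pow (insert x A). (g M :: rat)) = (\<Sum>M\<in>Pow A. g M) + (\<Sum>M\<in>Pow A. g (insert x M))"
proof -
  have d: "Pow A \<inter> insert x ` Pow A = {}" using assms by auto
  have i: "inj_on (insert x) (Pow A)"
  proof (rule inj_onI)
    fix M N assume MN: "M \<in> Pow A" "N \<in> Pow A" "insert x M = insert x N"
    then have "x \<notin> M" "x \<notin> N" using assms by auto
    then show "M = N" using MN(3) by (metis Diff_insert_absorb)
  qed
  show ?thesis unfolding Pow_insert using assms d
    by (simp add: sum.union_disjoint sum.reindex[OF i])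
qed

lemma alt_binom:
  assumes "finite A" "u < card A"
  shows "(\<Sum>M\<in>Pow A. (-1) ^ card M * poly_binom (v - int (card M)) u) = 0"
  using assms
proof (induction u arbitrary: A)
  case 0
  have "A \<noteq> {}" using 0 by auto
  then obtain x where "x \<in> A" by blast
  define A' where "A' = A - {x}"
  have A: "A = insert x A'" "x \<notin> A'" "finite A'"
    using 0(1) \<open>x \<in> A\<close> unfolding A'_def by auto
  have c: "card (insert x M) = Suc (card M)" if "M \<in> Pow A'" for M
  proof -
    have "finite M" "x \<notin> M" using that A(2,3) finite_subset by auto
    then show ?thesis by simp
  qed
  have h: "(\<Sum>M\<in>Pow A'. (-1::rat) ^ card (insert x M)) = (\<Sum>M\<in>Pow A'. - ((-1) ^ card M))"
    by (rule sum.cong[OF refl]) (simp add: c)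
  show ?case unfolding A(1) pow_insert_sum[OF A(3) A(2)]
    by (simp add: h poly_binom_def sum_negf)
next
  case (Suc u)
  have "A \<noteq> {}" using Suc.prems by auto
  then obtain x where "x \<in> A" by blast
  define A' where "A' = A - {x}"
  have A: "A = insert x A'" "x \<notin> A'" "finite A'"
    using Suc.prems(1) \<open>x \<in> A\<close> unfolding A'_def by auto
  have cA: "u < card A'" using Suc.prems A by simp
  have c: "card (insert x M) = Suc (card M)" if "M \<in> Pow A'" for M
  proof -
    have "finite M" "x \<notin> M" using that A(2,3) finite_subset by auto
    then show ?thesis by simp
  qed
  have "(\<Sum>M\<in>Pow A. (-1) ^ card M * poly_binom (v - int (card M)) (Suc u))
     = (\<Sum>M\<in>Pow A'. (-1) ^ card M * (poly_binom (v - int (card M)) (Suc u) - poly_binom (v - int (card M) - 1) (Suc u)))"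
  proof -
    have h: "(\<Sum>M\<in>Pow A'. (-1) ^ card (insert x M) * poly_binom (v - int (card (insert x M))) (Suc u))
       = (\<Sum>M\<in>Pow A'. - ((-1) ^ card M * poly_binom (v - int (card M) - 1) (Suc u)))"
    proof (rule sum.cong[OF refl])
      fix M assume M: "M \<in> Pow A'"
      have e: "v - int (card (insert x M)) = v - int (card M) - 1" using c[OF M] by simp
      have e2: "v - int (Suc (card M)) = v - int (card M) - 1" by simp
      show "(- 1) ^ card (insert x M) * poly_binom (v - int (card (insert x M))) (Suc u) =
           - ((- 1) ^ card M * poly_binom (v - int (card M) - 1) (Suc u))"
        unfolding e c[OF M] power_Suc e2 by (simp only: mult_minus_left mult_1_left)
    qed
    show ?thesis unfolding A(1) pow_insert_sum[OF A(3) A(2)] h sum_negf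
      by (simp add: right_diff_distrib sum_subtractf)
  qed
  also have "\<dots> = (\<Sum>M\<in>Pow A'. (-1) ^ card M * poly_binom (v - int (card M)) u)"
    by (simp add: pb_pascal)
  also have "\<dots> = 0" by (rule Suc.IH[OF A(3) cA])
  finally show ?case .
qed

lemma Kconst:
  fixes \<alpha> \<Gamma> :: "nat \<Rightarrow> int"
  shows "(\<Sum>\<sigma>\<in>{\<sigma>. \<sigma> permutes {1..s}}. sign \<sigma> * Vandermonde s (\<lambda>l. perm_act \<alpha> \<sigma> \<Gamma> l - indicator_vec M l))
   = (\<Sum>\<sigma>\<in>{\<sigma>. \<sigma> permutes {1..s}}. sign \<sigma> * (\<Prod>p\<in>pairsP s. (\<Gamma> (\<sigma> (snd p)) + \<alpha> (\<sigma> (snd p))) - (\<Gamma> (\<sigma> (fst p)) + \<alpha> (\<sigma> (fst p)))))"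
proof -
  let ?a = "\<lambda>j. \<Gamma> j + \<alpha> j"
  let ?c = "\<lambda>l. \<alpha> l + indicator_vec M l"
  have "(\<Sum>\<sigma>\<in>{\<sigma>. \<sigma> permutes {1..s}}. sign \<sigma> * Vandermonde s (\<lambda>l. perm_act \<alpha> \<sigma> \<Gamma> l - indicator_vec M l))
    = (\<Sum>\<sigma>\<in>{\<sigma>. \<sigma> permutes {1..s}}. sign (inv \<sigma>) * Vandermonde s (\<lambda>l. perm_act \<alpha> (inv \<sigma>) \<Gamma> l - indicator_vec M l))"
    by (rule sum_permutations_inverse)
  also have "\<dots> = (\<Sum>\<sigma>\<in>{\<sigma>. \<sigma> permutes {1..s}}. sign \<sigma> * Vandermonde s (\<lambda>l. ?a (\<sigma> l) - ?c l))"
  proof (rule sum.cong[OF refl])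
    fix \<sigma> assume "\<sigma> \<in> {\<sigma>. \<sigma> permutes {1..s}}"
    then have p: "\<sigma> permutes {1..s}" by simp
    have ii: "inv (inv \<sigma>) = \<sigma>" using permutes_bij[OF p] by (simp add: inv_inv_eq)
    have sg: "sign (inv \<sigma>) = (sign \<sigma> :: int)"
      using sign_inverse p permutation_permutes by (metis finite_atLeastAtMost)
    show "sign (inv \<sigma>) * Vandermonde s (\<lambda>l. perm_act \<alpha> (inv \<sigma>) \<Gamma> l - indicator_vec M l) =
         sign \<sigma> * Vandermonde s (\<lambda>l. ?a (\<sigma> l) - ?c l)"
      unfolding sg perm_act_def ii by (simp add: algebra_simps)
  qed
  also have "\<dots> = (\<Sum>\<sigma>\<in>{\<sigma>. \<sigma> permutes {1..s}}. sign \<sigma> * (\<Prod>p\<in>pairsP s. ?a (\<sigma> (snd p)) - ?a (\<sigma> (fst p))))"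
    by (rule indep)
  finally show ?thesis .
qed

theorem corollary6p4:
  fixes s u :: nat and Pi_set :: "nat set" and v :: int and \<Gamma> \<alpha> :: "nat \<Rightarrow> int"
  assumes "s \<ge> 1" and "Pi_set \<subseteq> {1..s}" and "card Pi_set > u"
  shows "(\<Sum>\<sigma>\<in>{\<sigma>. \<sigma> permutes {1..s}}. \<Sum>M\<in>Pow Pi_set.
            of_int ((-1) ^ card M * sign \<sigma> *
              Vandermonde s (\<lambda>l. perm_act \<alpha> \<sigma> \<Gamma> l - indicator_vec M l))
            * poly_binom (v - int (card M)) u) = (0::rat)"
proof -
  let ?S = "{\<sigma>. \<sigma> permutes {1..s}}"
  let ?V = "\<lambda>\<sigma> M. Vandermonde s (\<lambda>l. perm_act \<alpha> \<sigma> \<Gamma> l - indicator_vec M l)"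
  define K where "K = (\<Sum>\<sigma>\<in>?S. sign \<sigma> * (\<Prod>p\<in>pairsP s. (\<Gamma> (\<sigma> (snd p)) + \<alpha> (\<sigma> (snd p))) - (\<Gamma> (\<sigma> (fst p)) + \<alpha> (\<sigma> (fst p)))))"
  have fin: "finite Pi_set" using assms(2) finite_subset by blast
  have "(\<Sum>\<sigma>\<in>?S. \<Sum>M\<in>Pow Pi_set. of_int ((-1) ^ card M * sign \<sigma> * ?V \<sigma> M) * poly_binom (v - int (card M)) u)
     = (\<Sum>M\<in>Pow Pi_set. \<Sum>\<sigma>\<in>?S. ((-1) ^ card M * poly_binom (v - int (card M)) u) * of_int (sign \<sigma> * ?V \<sigma> M))"
    by (subst sum.swap) (simp add: mult_ac)
  also have "\<dots> = (\<Sum>M\<in>Pow Pi_set. ((-1) ^ card M * poly_binom (v - int (card M)) u) * of_int (\<Sum>\<sigma>\<in>?S. sign \<sigma> * ?V \<sigma> M))"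
    by (simp add: sum_distrib_left of_int_sum)
  also have "\<dots> = (\<Sum>M\<in>Pow Pi_set. ((-1) ^ card M * poly_binom (v - int (card M)) u) * of_int K)"
    unfolding K_def Kconst ..
  also have "\<dots> = (\<Sum>M\<in>Pow Pi_set. (-1) ^ card M * poly_binom (v - int (card M)) u) * of_int K"
    by (simp add: sum_distrib_right)
  also have "\<dots> = 0" using alt_binom[OF fin assms(3)] by simp
  finally show ?thesis .
qed

end
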